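(* Let $\hat{\mathfrak{so}}$ be the extended Schr\"odinger-Virasoro algebra over $\mathbb{C}$ and, for $g\in\frac12\mathbb{Z}$, let $\Delta_g(\hat{\mathfrak{so}})$ be the space of $\frac12$-derivations of $\hat{\mathfrak{so}}$ of degree $g$. Then $\Delta_{j+\frac12}(\hat{\mathfrak{so}})=0$ for every $j\in\mathbb{Z}$.
   Context: The extended Schr\"odinger-Virasoro algebra $\hat{\mathfrak{so}}$ is the complex Lie algebra with basis $\{L_n,M_n,N_n,Y_{n+\frac12},C_L,C_{LN},C_N\mid n\in\mathbb{Z}\}$ and brackets (all others zero, $C_L,C_{LN},C_N$ central): $[L_m,L_n]=(n-m)L_{m+n}+\delta_{m+n,0}\frac{m^3-m}{12}C_L$, $[L_m,M_n]=nM_{m+n}$, $[L_m,N_n]=nN_{m+n}+\delta_{m+n,0}(m^2-m)C_{LN}$, $[N_m,M_n]=2M_{m+n}$, $[L_m,Y_{n+\frac12}]=(n+\frac{1-m}{2})Y_{m+n+\frac12}$, $[N_m,Y_{n+\frac12}]=Y_{m+n+\frac12}$, $[Y_{m+\frac12},Y_{n+\frac12}]=(m-n)M_{m+n+1}$, $[N_m,N_n]=n\delta_{m+n,0}C_N$, for all $m,n\in\mathbb{Z}$. It is $\frac12\mathbb{Z}$-graded by $\hat{\mathfrak{so}}_0=\langle L_0,M_0,N_0,C_L,C_{LN},C_N\rangle$, $\hat{\mathfrak{so}}_n=\langle L_n,M_n,N_n\rangle$ for $n\in\mathbb{Z}\setminus\{0\}$, $\hat{\mathfrak{so}}_{n+\frac12}=\langle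 Y_{n+\frac12}\rangle$. A $\frac12$-derivation of a Lie algebra $L$ is a linear map $\varphi:L\to L$ with $\varphi([x,y])=\frac12([\varphi(x),y]+[x,\varphi(y)])$ for all $x,y$. A $\frac12$-derivation $\varphi$ has degree $g$ if $\varphi(\hat{\mathfrak{so}}_h)\subseteq\hat{\mathfrak{so}}_{g+h}$ for all $h\in\frac12\mathbb{Z}$. *)

theory Defs
  imports Complex_Main
begin

text \<open>Basis of the extended Schroedinger-Virasoro algebra.
  Y n stands for Y_{n+1/2}.\<close>
datatype sv_basis = L int | M int | N int | Y int | CL | CLN | CN

text \<open>Elements are finitely supported coefficient functions on the basis.\<close>
type_synonym sv = "sv_basis \<Rightarrow> complex"

definition sv_space :: "sv set" where
  "sv_space = {x. finite {b. x b \<noteq> 0}}"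

definition e :: "sv_basis \<Rightarrow> sv" where
  "e b = (\<lambda>c. if c = b then 1 else 0)"

definition dlt :: "int \<Rightarrow> complex" where
  "dlt k = (if k = 0 then 1 else 0)"

fun brb :: "sv_basis \<Rightarrow> sv_basis \<Rightarrow> sv" where
  "brb (L m) (L n) = (\<lambda>c. of_int (n - m) * e (L (m + n)) c
       + dlt (m + n) * (of_int (m^3 - m) / 12) * e CL c)"
| "brb (L m) (M n) = (\<lambda>c. of_int n * e (M (m + n)) c)"
| "brb (M n) (L m) = (\<lambda>c. - of_int n * e (M (m + n)) c)"
| "brb (L m) (N n) = (\<lambda>c. of_int n * e (N (m + n)) c
       + dlt (m + n) * of_int (m^2 - m) * e CLN c)"
| "brb (N n) (L m) = (\<lambda>c. - (of_int n * e (N (m + n)) c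
       + dlt (m + n) * of_int (m^2 - m) * e CLN c))"
| "brb (N m) (M n) = (\<lambda>c. 2 * e (M (m + n)) c)"
| "brb (M n) (N m) = (\<lambda>c. - 2 * e (M (m + n)) c)"
| "brb (L m) (Y n) = (\<lambda>c. (of_int n + (1 - of_int m) / 2) * e (Y (m + n)) c)"
| "brb (Y n) (L m) = (\<lambda>c. - (of_int n + (1 - of_int m) / 2) * e (Y (m + n)) c)"
| "brb (N m) (Y n) = (\<lambda>c. e (Y (m + n)) c)"
| "brb (Y n) (N m) = (\<lambda>c. - e (Y (m + n)) c)"
| "brb (Y m) (Y n) = (\<lambda>c. of_int (m - n) * e (M (m + n + 1)) c)"
| "brb (N m) (N n) = (\<lambda>c. of_int n * dlt (m + n) * e CN c)"
| "brb _ _ = (\<lambda>c. 0)"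

definition br :: "sv \<Rightarrow> sv \<Rightarrow> sv" where
  "br x y = (\<lambda>c. \<Sum>a\<in>{a. x a \<noteq> 0}. \<Sum>b\<in>{b. y b \<noteq> 0}. x a * y b * brb a b c)"

text \<open>Twice the degree (so that degrees in (1/2)Z become integers).\<close>
fun deg2 :: "sv_basis \<Rightarrow> int" where
  "deg2 (L n) = 2 * n"
| "deg2 (M n) = 2 * n"
| "deg2 (N n) = 2 * n"
| "deg2 (Y n) = 2 * n + 1"
| "deg2 CL = 0"
| "deg2 CLN = 0"
| "deg2 CN = 0"

text \<open>Homogeneous component of degree d/2.\<close>
definition sv_hom :: "int \<Rightarrow> sv set" where
  "sv_hom d = {x \<in> sv_space. \<forall>b. x b \<noteq> 0 \<longrightarrow> deg2 b = d}"

definition is_linear_map :: "(sv \<Rightarrow> sv) \<Rightarrow> bool" where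
  "is_linear_map \<phi> \<longleftrightarrow> (\<forall>x\<in>sv_space. \<phi> x \<in> sv_space)
     \<and> (\<forall>x\<in>sv_space. \<forall>y\<in>sv_space. \<phi> (\<lambda>b. x b + y b) = (\<lambda>b. \<phi> x b + \<phi> y b))
     \<and> (\<forall>c::complex. \<forall>x\<in>sv_space. \<phi> (\<lambda>b. c * x b) = (\<lambda>b. c * \<phi> x b))"

definition half_derivation :: "(sv \<Rightarrow> sv) \<Rightarrow> bool" where
  "half_derivation \<phi> \<longleftrightarrow> is_linear_map \<phi> \<and>
     (\<forall>x\<in>sv_space. \<forall>y\<in>sv_space.
        \<phi> (br x y) = (\<lambda>c. (1/2) * (br (\<phi> x) y c + br x (\<phi> y) c)))"

text \<open>Degree g = g2/2.\<close>
definition has_degree2 :: "int \<Rightarrow> (sv \<Rightarrow> sv) \<Rightarrow> bool" where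
  "has_degree2 g2 \<phi> \<longleftrightarrow> (\<forall>h2. \<forall>x\<in>sv_hom h2. \<phi> x \<in> sv_hom (g2 + h2))"

end

theory Submission
  imports Defs
begin

lemma supp_e: "{c. e b c \<noteq> 0} = {b}" by (auto simp: e_def)

lemma e_space: "e b \<in> sv_space" unfolding sv_space_def mem_Collect_eq by (auto simp: e_def intro: finite_subset[of _ "{b}"])

lemma e_hom: "e b \<in> sv_hom (deg2 b)"
  unfolding sv_hom_def using e_space by (auto simp: e_def)

lemma supp_se: "s \<noteq> 0 \<Longrightarrow> {c. s * e b c \<noteq> 0} = {b}" by (auto simp: e_def)

lemma br_se: "br (\<lambda>c. s * e p c) (\<lambda>c. t * e q c) = (\<lambda>c. s * t * brb p q c)"
proof (cases "s = 0 \<or> t = 0")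
  case True then show ?thesis by (auto simp: br_def)
next
  case False then show ?thesis by (simp add: br_def supp_se e_def)
qed

lemma br_e: "br (e p) (e q) = brb p q"
  using br_se[of 1 p 1 q] by simp

lemma br_zero_left: "br (\<lambda>c. 0) y = (\<lambda>c. 0)" by (simp add: br_def)
lemma br_zero_right: "br x (\<lambda>c. 0) = (\<lambda>c. 0)" by (simp add: br_def)

lemma hom_odd: assumes "v \<in> sv_hom (2*k+1)" shows "v = (\<lambda>c. v (Y k) * e (Y k) c)"
proof
  fix c show "v c = v (Y k) * e (Y k) c"
  proof (cases "c = Y k")
    case True then show ?thesis by (simp add: e_def)
  next
    case False
    have "v c = 0"
    proof (rule ccontr)
      assume "v c \<noteq> 0"
      then have "deg2 c = 2*k+1" using assms by (auto simp: sv_hom_def)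
      then show False using False by (cases c) (auto, presburger+)
    qed
    then show ?thesis using False by (simp add: e_def)
  qed
qed

lemma brb_L0: "brb (L 0) b = (\<lambda>c. of_int (deg2 b) / 2 * e b c)"
  by (cases b) (auto simp: e_def dlt_def fun_eq_iff field_simps)

lemma br_L0: assumes "v \<in> sv_hom d" shows "br (e (L 0)) v = (\<lambda>c. of_int d / 2 * v c)"
proof
  fix c
  have fin: "finite {b. v b \<noteq> 0}" using assms by (simp add: sv_hom_def sv_space_def)
  have "br (e (L 0)) v c = (\<Sum>b\<in>{b. v b \<noteq> 0}. v b * brb (L 0) b c)"
    by (simp add: br_def supp_e e_def)
  also have "\<dots> = (\<Sum>b\<in>{b. v b \<noteq> 0}. if b = c then of_int d / 2 * v c else 0)"
    apply (rule sum.cong, simp)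
    using assms by (auto simp: brb_L0 e_def sv_hom_def)
  also have "\<dots> = of_int d / 2 * v c"
    using fin by (simp add: sum.delta')
  finally show "br (e (L 0)) v c = of_int d / 2 * v c" .
qed

lemma brb_N0_M: "brb (N 0) b (M k) = (if b = M k then 2 else 0)"
  by (cases b) (auto simp: e_def dlt_def)

lemma br_N0_M: assumes "w \<in> sv_space" shows "br (e (N 0)) w (M k) = 2 * w (M k)"
proof -
  have fin: "finite {b. w b \<noteq> 0}" using assms by (simp add: sv_space_def)
  have "br (e (N 0)) w (M k) = (\<Sum>b\<in>{b. w b \<noteq> 0}. w b * brb (N 0) b (M k))"
    by (simp add: br_def supp_e e_def)
  also have "\<dots> = (\<Sum>b\<in>{b. w b \<noteq> 0}. if b = M k then 2 * w (M k) else 0)"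
    by (rule sum.cong) (auto simp: brb_N0_M)
  also have "\<dots> = 2 * w (M k)" using fin by (simp add: sum.delta')
  finally show ?thesis .
qed

theorem mainTheorem2:
  fixes j :: int and \<phi> :: "sv \<Rightarrow> sv"
  assumes "half_derivation \<phi>" and "has_degree2 (2 * j + 1) \<phi>"
  shows "\<forall>x\<in>sv_space. \<phi> x = (\<lambda>b. 0)"
proof -
  have lin: "is_linear_map \<phi>" and hd: "\<And>x y. x \<in> sv_space \<Longrightarrow> y \<in> sv_space \<Longrightarrow>
        \<phi> (br x y) = (\<lambda>c. (1/2) * (br (\<phi> x) y c + br x (\<phi> y) c))"
    using assms(1) by (auto simp: half_derivation_def)
  have add: "\<And>x y. x \<in> sv_space \<Longrightarrow> y \<in> sv_space \<Longrightarrow> \<phi> (\<lambda>b. x b + y b) = (\<lambda>b. \<phi> x b + \<phi> y b)"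
    and smul: "\<And>c x. x \<in> sv_space \<Longrightarrow> \<phi> (\<lambda>b. c * x b) = (\<lambda>b. c * \<phi> x b)"
    using lin by (auto simp: is_linear_map_def)
  have dg: "\<And>b. \<phi> (e b) \<in> sv_hom (2*j+1 + deg2 b)"
    using assms(2) e_hom by (auto simp: has_degree2_def)
  have dgsp: "\<And>b. \<phi> (e b) \<in> sv_space" using dg by (auto simp: sv_hom_def)
  have phi0: "\<phi> (\<lambda>c. 0) = (\<lambda>c. 0)"
    using smul[of "e (L 0)" 0] e_space by simp
  define u where "u = \<phi> (e (L 0))"
  define a where "a = u (Y j)"
  have u: "u = (\<lambda>c. a * e (Y j) c)"
    unfolding a_def by (rule hom_odd) (use dg[of "L 0"] in \<open>simp add: u_def\<close>)
  define v where "v = \<phi> (e (N 0))"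
  define cc where "cc = v (Y j)"
  have vh: "v \<in> sv_hom (2*j+1)" using dg[of "N 0"] by (simp add: v_def)
  have v: "v = (\<lambda>c. cc * e (Y j) c)"
    unfolding cc_def by (rule hom_odd) (use vh in simp)
  have B: "0 = (1/2) * (- a + of_int (2*j+1) / 2 * cc)"
  proof -
    have "\<phi> (br (e (L 0)) (e (N 0))) = (\<lambda>c. 0)"
      by (simp add: br_e brb_L0 phi0)
    moreover have "br u (e (N 0)) = (\<lambda>c. a * (- e (Y j) c))"
      using br_se[of a "Y j" 1 "N 0"] by (simp add: u)
    ultimately have "(\<lambda>c::sv_basis. 0::complex) = (\<lambda>c. (1/2) * (a * (- e (Y j) c) + of_int (2*j+1) / 2 * v c))"
      using hd[OF e_space e_space, of "L 0" "N 0"] br_L0[OF vh]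
      by (simp add: u_def[symmetric] v_def[symmetric])
    from fun_cong[OF this, of "Y j"] show ?thesis by (simp add: e_def cc_def)
  qed
  have C: "cc = 0"
  proof -
    define w where "w = \<phi> (e (Y (j+1)))"
    have "br (e (N 0)) (e (Y (j+1))) = e (Y (j+1))"
      by (simp add: br_e fun_eq_iff)
    moreover have "br v (e (Y (j+1))) = (\<lambda>c. cc * (- e (M (2*j+2)) c))"
      using br_se[of cc "Y j" 1 "Y (j+1)"] by (simp add: v add.commute add.left_commute)
    ultimately have "w = (\<lambda>c. (1/2) * (cc * (- e (M (2*j+2)) c) + br (e (N 0)) w c))"
      using hd[OF e_space e_space, of "N 0" "Y (j+1)"]
      by (simp add: w_def[symmetric] v_def[symmetric])
    from fun_cong[OF this, of "M (2*j+2)"] br_N0_M[of w "2*j+2"] dgsp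
    show ?thesis by (simp add: e_def w_def)
  qed
  have a0: "a = 0" using B C by simp
  have u0: "u = (\<lambda>c. 0)" using u a0 by simp
  have gen: "\<And>b. deg2 b \<noteq> 2*j+1 \<Longrightarrow> \<phi> (e b) = (\<lambda>c. 0)"
  proof -
    fix b assume ne: "deg2 b \<noteq> 2*j+1"
    define p where "p = \<phi> (e b)"
    have "\<phi> (br (e (L 0)) (e b)) = (\<lambda>c. of_int (deg2 b) / 2 * p c)"
      using smul[OF e_space, of "of_int (deg2 b) / 2" b] by (simp add: br_e brb_L0 p_def)
    then have "(\<lambda>c. of_int (deg2 b) / 2 * p c) = (\<lambda>c. (1/2) * (of_int (2*j+1 + deg2 b) / 2 * p c))"
      using hd[OF e_space e_space, of "L 0" b] br_L0[OF dg[of b]]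
      by (simp add: u_def[symmetric] p_def[symmetric] u0 br_zero_left)
    then have "\<And>c. (of_int (deg2 b) - of_int (2*j+1)) * p c = 0"
      by (auto simp: fun_eq_iff field_simps)
    moreover have "(of_int (deg2 b) :: complex) \<noteq> of_int (2*j+1)" using ne by (metis of_int_eq_iff)
    then have "(of_int (deg2 b) - of_int (2*j+1) :: complex) \<noteq> 0" by simp
    ultimately show "\<phi> (e b) = (\<lambda>c. 0)" by (auto simp: p_def fun_eq_iff)
  qed
  have all: "\<And>b. \<phi> (e b) = (\<lambda>c. 0)"
  proof -
    fix b show "\<phi> (e b) = (\<lambda>c. 0)"
    proof (cases "deg2 b = 2*j+1")
      case False then show ?thesis by (rule gen)
    next
      case True
      then have bY: "b = Y j" by (cases b) (auto, presburger+)
      have z1: "\<phi> (e (N 1)) = (\<lambda>c. 0)" by (rule gen) (simp, presburger)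
      have z2: "\<phi> (e (Y (j - 1))) = (\<lambda>c. 0)" by (rule gen) simp
      have "br (e (N 1)) (e (Y (j - 1))) = e (Y j)"
        by (simp add: br_e fun_eq_iff)
      then show ?thesis
        using hd[OF e_space e_space, of "N 1" "Y (j - 1)"] z1 z2 bY
        by (simp add: br_zero_left br_zero_right)
    qed
  qed
  have ind: "\<And>S x. finite S \<Longrightarrow> x \<in> sv_space \<Longrightarrow> {b. x b \<noteq> 0} \<subseteq> S \<Longrightarrow> \<phi> x = (\<lambda>c. 0)"
  proof -
    fix S :: "sv_basis set"
    show "finite S \<Longrightarrow> (\<And>x. x \<in> sv_space \<Longrightarrow> {b. x b \<noteq> 0} \<subseteq> S \<Longrightarrow> \<phi> x = (\<lambda>c. 0))"
    proof (induction S rule: finite_induct)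
      case empty
      then have "x = (\<lambda>c. 0)" by auto
      then show ?case using phi0 by simp
    next
      case (insert b S)
      define x' where "x' = x(b := 0)"
      have x'sp: "x' \<in> sv_space" using insert.prems(1)
        unfolding sv_space_def x'_def by (auto elim: finite_subset[rotated])
      have "{c. x' c \<noteq> 0} \<subseteq> S" using insert.prems(2) by (auto simp: x'_def)
      then have px': "\<phi> x' = (\<lambda>c. 0)" using insert.IH x'sp by blast
      have sesp: "(\<lambda>c. x b * e b c) \<in> sv_space"
        by (auto simp: sv_space_def e_def intro: finite_subset[of _ "{b}"])
      have "x = (\<lambda>c. x' c + x b * e b c)" by (auto simp: x'_def e_def fun_eq_iff)
      then have "\<phi> x = (\<lambda>c. \<phi> x' c + \<phi> (\<lambda>c. x b * e b c) c)"
        using add[OF x'sp sesp] by simp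
      also have "\<dots> = (\<lambda>c. 0)" using px' smul[OF e_space, of "x b" b] all[of b] by simp
      finally show ?case .
    qed
  qed
  show ?thesis
  proof
    fix x assume "x \<in> sv_space"
    then show "\<phi> x = (\<lambda>b. 0)" using ind[of "{b. x b \<noteq> 0}" x] by (simp add: sv_space_def)
  qed
qed

end
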